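(* Let $\tau=(1,\tau)\sigma\in W$. For $x\in\mathbb Z_2$ define $\tau^x\in W$ recursively by $\tau^x=(\tau^{x/2},\tau^{x/2})$ if $x\in2\mathbb Z_2$ and $\tau^x=(\tau^{(x-1)/2},\tau^{(x+1)/2})\sigma$ if $x\in2\mathbb Z_2+1$, and let $T=\{\tau^x:x\in\mathbb Z_2\}$ (the closure of $\langle\tau\rangle$). For $x\in\mathbb Z_2^\times$ define $u_x\in W$ recursively by $u_x=(u_x,u_x\tau^{(x-1)/2})$, let $U=\{u_x:x\in\mathbb Z_2^\times\}$ and $A=TU$. Then $N_W(T)=A$ and $N_W(A)=A$.
   Context: $W$ is the isometry group of the binary rooted tree $\{0,1\}^*$. Elements are written $(g_0,g_1)\pi$, $\pi\in\mathrm{Sym}(\{0,1\})$, meaning $(xw)^{(g_0,g_1)\pi}=x^\pi w^{g_x}$; $\sigma$ is the transposition acting rigidly at the root. $\mathbb Z_2$ is the ring of $2$-adic integers and $\mathbb Z_2^\times$ its group of units. *)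

theory Defs
  imports "HOL-Algebra.Group_Action"
begin

text \<open>Vertices of the binary rooted tree are finite words over {0,1}, encoded as
  bool lists (False = 0, True = 1).  Following the paper, W acts on the right:
  the word w is mapped to w^g, and the product g h means "first g, then h".\<close>

definition tree_isometries :: "(bool list \<Rightarrow> bool list) set" where
  "tree_isometries = {f. bij f \<and> (\<forall>w n. f (take n w) = take n (f w))
                              \<and> (\<forall>w. length (f w) = length w)}"

definition W :: "(bool list \<Rightarrow> bool list) monoid" where
  "W = \<lparr>carrier = tree_isometries, mult = (\<lambda>g h. h \<circ> g), one = id\<rparr>"

text \<open>A 2-adic integer is represented by its coherent sequence of residues
  x n \<in> {0..<2^n} (the image of x in Z/2^n Z), with x n = x (n+1) mod 2^n.\<close>

definition Z2 :: "(nat \<Rightarrow> int) set" where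
  "Z2 = {x. \<forall>n. 0 \<le> x n \<and> x n < 2 ^ n \<and> x n = x (Suc n) mod 2 ^ n}"

definition z2_of_int :: "int \<Rightarrow> nat \<Rightarrow> int" where
  "z2_of_int k = (\<lambda>n. k mod 2 ^ n)"

definition z2_add :: "(nat \<Rightarrow> int) \<Rightarrow> (nat \<Rightarrow> int) \<Rightarrow> nat \<Rightarrow> int" where
  "z2_add x y = (\<lambda>n. (x n + y n) mod 2 ^ n)"

definition z2_mult :: "(nat \<Rightarrow> int) \<Rightarrow> (nat \<Rightarrow> int) \<Rightarrow> nat \<Rightarrow> int" where
  "z2_mult x y = (\<lambda>n. (x n * y n) mod 2 ^ n)"

definition z2_even :: "(nat \<Rightarrow> int) \<Rightarrow> bool" where
  "z2_even x \<longleftrightarrow> (\<exists>y\<in>Z2. z2_add y y = x)"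

definition z2_half :: "(nat \<Rightarrow> int) \<Rightarrow> nat \<Rightarrow> int" where
  "z2_half x = (THE y. y \<in> Z2 \<and> z2_add y y = x)"

definition Z2_units :: "(nat \<Rightarrow> int) set" where
  "Z2_units = {x \<in> Z2. \<exists>y\<in>Z2. z2_mult x y = z2_of_int 1}"

text \<open>tau^x = (tau^{x/2}, tau^{x/2}) for x \<in> 2Z_2 and
  tau^x = (tau^{(x-1)/2}, tau^{(x+1)/2}) sigma for x \<in> 2Z_2+1,
  given through its action on words: (b w)^{(g0,g1)\<pi>} = b^\<pi> w^{g_b}.\<close>

fun tau_pow :: "(nat \<Rightarrow> int) \<Rightarrow> bool list \<Rightarrow> bool list" where
  "tau_pow x [] = []"
| "tau_pow x (b # w) =
     (if z2_even x then b # tau_pow (z2_half x) w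
      else if b then False # tau_pow (z2_half (z2_add x (z2_of_int 1))) w
      else True # tau_pow (z2_half (z2_add x (z2_of_int (-1)))) w)"

definition T :: "(bool list \<Rightarrow> bool list) set" where
  "T = tau_pow ` Z2"

text \<open>u_x = (u_x, u_x tau^{(x-1)/2}) for x \<in> Z_2^\<times>; the product u_x tau^y means
  first u_x, then tau^y (right action).\<close>

fun u_elt :: "(nat \<Rightarrow> int) \<Rightarrow> bool list \<Rightarrow> bool list" where
  "u_elt x [] = []"
| "u_elt x (b # w) =
     (if b then True # tau_pow (z2_half (z2_add x (z2_of_int (-1)))) (u_elt x w)
      else False # u_elt x w)"

definition U :: "(bool list \<Rightarrow> bool list) set" where
  "U = u_elt ` Z2_units"

definition A :: "(bool list \<Rightarrow> bool list) set" where
  "A = T <#>\<^bsub>W\<^esub> U"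

end

theory Submission
  imports Defs
begin


fun enc :: "bool list \<Rightarrow> int" where
  "enc [] = 0"
| "enc (b # w) = (if b then 1 else 0) + 2 * enc w"

fun dec :: "nat \<Rightarrow> int \<Rightarrow> bool list" where
  "dec 0 v = []"
| "dec (Suc n) v = (v mod 2 = 1) # dec n (v div 2)"

lemma pow2_Suc_mod: "(v::int) mod 2 ^ Suc n = v mod 2 + 2 * ((v div 2) mod 2 ^ n)"
  using mod_mult2_eq'[of v 2 "2^n"] by (simp add: algebra_simps)

lemma enc_bounds: "0 \<le> enc w \<and> enc w < 2 ^ length w"
  by (induction w) auto

lemma length_dec[simp]: "length (dec n v) = n"
  by (induction n arbitrary: v) auto

lemma enc_dec[simp]: "enc (dec n v) = v mod 2 ^ n"
proof (induction n arbitrary: v)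
  case 0 then show ?case by simp
next
  case (Suc n)
  have "v mod 2 = 0 \<or> v mod 2 = 1" by auto
  then show ?case using Suc pow2_Suc_mod[of v n] by auto
qed

lemma dec_enc[simp]: "dec (length w) (enc w) = w"
  by (induction w) auto

lemma words_eq: "length u = length w \<Longrightarrow> enc u = enc w \<Longrightarrow> u = w"
  by (metis dec_enc)

lemma dec_mod: "dec n (v mod 2 ^ n) = dec n v"
  by (metis dec_enc enc_dec length_dec)

lemma dec_cong: "u mod 2 ^ n = v mod 2 ^ n \<Longrightarrow> dec n u = dec n v"
  by (metis dec_mod)

lemma dec_eq_iff: "dec n u = dec n v \<longleftrightarrow> u mod 2 ^ n = v mod 2 ^ n"
  by (metis dec_mod enc_dec)

lemma take_dec: "m \<le> n \<Longrightarrow> take m (dec n v) = dec m v"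
proof (induction m arbitrary: n v)
  case 0 then show ?case by simp
next
  case (Suc m)
  then obtain k where "n = Suc k" "m \<le> k" by (cases n) auto
  then show ?case using Suc by simp
qed

lemma enc_take: "enc (take m w) = enc w mod 2 ^ m"
proof (induction w arbitrary: m)
  case Nil then show ?case by simp
next
  case (Cons b w)
  show ?case
  proof (cases m)
    case 0 then show ?thesis by simp
  next
    case (Suc k)
    then show ?thesis using Cons pow2_Suc_mod[of "(if b then 1 else 0) + 2 * enc w" k] by simp
  qed
qed



lemma Z2_iff: "x \<in> Z2 \<longleftrightarrow> (\<forall>n. 0 \<le> x n \<and> x n < 2 ^ n \<and> x n = x (Suc n) mod 2 ^ n)"
  by (simp add: Z2_def)

lemma Z2_bounds: "x \<in> Z2 \<Longrightarrow> 0 \<le> x n \<and> x n < 2 ^ n"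
  unfolding Z2_def by blast

lemma Z2_coh: "x \<in> Z2 \<Longrightarrow> x (Suc n) mod 2 ^ n = x n"
  unfolding Z2_def mem_Collect_eq by metis

lemma Z2_mod_self: "x \<in> Z2 \<Longrightarrow> x n mod 2 ^ n = x n"
  using Z2_bounds[of x n] by simp

lemma Z2_mod: assumes "x \<in> Z2" "n \<le> N" shows "x N mod 2 ^ n = x n"
  using assms(2)
proof (induction N rule: dec_induct)
  case base then show ?case using Z2_mod_self assms(1) by blast
next
  case (step N)
  have "x (Suc N) mod 2 ^ n = x (Suc N) mod 2 ^ N mod 2 ^ n"
    using step(1) by (simp add: mod_mod_cancel le_imp_power_dvd)
  also have "x (Suc N) mod 2 ^ N = x N" using assms(1) by (rule Z2_coh)
  finally show ?case using step by simp
qed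

lemma pow_dvd_Suc: "(2::int) ^ n dvd 2 ^ Suc n" by simp

lemma Z2_seqI:
  assumes "\<And>n. f (Suc n) mod 2 ^ n = f n mod 2 ^ n"
  shows "(\<lambda>n. f n mod 2 ^ n) \<in> Z2"
  unfolding Z2_def using assms by (auto simp: mod_mod_cancel)

lemma Z2_seqI':
  assumes "\<And>n. f (Suc n) mod 2 ^ n = f n mod 2 ^ n" "\<And>n. x n = f n mod 2 ^ n"
  shows "x \<in> Z2"
proof -
  have "x = (\<lambda>n. f n mod 2 ^ n)" using assms(2) by auto
  then show ?thesis using Z2_seqI[OF assms(1)] by simp
qed

lemma z2_of_int_Z2[simp]: "z2_of_int k \<in> Z2"
  unfolding z2_of_int_def by (rule Z2_seqI) (simp add: mod_mod_cancel)

lemma z2_add_Z2[simp]: "x \<in> Z2 \<Longrightarrow> y \<in> Z2 \<Longrightarrow> z2_add x y \<in> Z2"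
  unfolding z2_add_def
proof (rule Z2_seqI)
  fix n assume "x \<in> Z2" "y \<in> Z2"
  have "(x (Suc n) + y (Suc n)) mod 2 ^ n = (x (Suc n) mod 2^n + y (Suc n) mod 2^n) mod 2 ^ n"
    by (simp add: mod_add_eq)
  also have "\<dots> = (x n + y n) mod 2 ^ n" using \<open>x \<in> Z2\<close> \<open>y \<in> Z2\<close> by (simp add: Z2_mod)
  finally show "(x (Suc n) + y (Suc n)) mod 2 ^ n = (x n + y n) mod 2 ^ n" .
qed

lemma z2_mult_Z2[simp]: "x \<in> Z2 \<Longrightarrow> y \<in> Z2 \<Longrightarrow> z2_mult x y \<in> Z2"
  unfolding z2_mult_def
proof (rule Z2_seqI)
  fix n assume "x \<in> Z2" "y \<in> Z2"
  have "(x (Suc n) * y (Suc n)) mod 2 ^ n = (x (Suc n) mod 2^n * (y (Suc n) mod 2^n)) mod 2 ^ n"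
    by (simp add: mod_mult_eq)
  also have "\<dots> = (x n * y n) mod 2 ^ n" using \<open>x \<in> Z2\<close> \<open>y \<in> Z2\<close> by (simp add: Z2_mod)
  finally show "(x (Suc n) * y (Suc n)) mod 2 ^ n = (x n * y n) mod 2 ^ n" .
qed

lemma z2_add_of_int: "x \<in> Z2 \<Longrightarrow> z2_add x (z2_of_int k) n = (x n + k) mod 2 ^ n"
  unfolding z2_add_def z2_of_int_def by (simp add: mod_add_right_eq)

lemma Z2_Suc_mod2: "x \<in> Z2 \<Longrightarrow> x (Suc n) mod 2 = x 1"
  using Z2_mod[of x 1 "Suc n"] by simp

lemma Z2_1: "x \<in> Z2 \<Longrightarrow> x 1 = 0 \<or> x 1 = 1"
  using Z2_bounds[of x 1] by auto

definition hf :: "(nat \<Rightarrow> int) \<Rightarrow> nat \<Rightarrow> int" where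
  "hf x = (\<lambda>n. x (Suc n) div 2)"

lemma div2_mod: "((a::int) mod 2 ^ Suc n) div 2 = (a div 2) mod 2 ^ n"
proof -
  have "a mod 2 = 0 \<or> a mod 2 = 1" by auto
  then show ?thesis using pow2_Suc_mod[of a n] by auto
qed

lemma hf_Z2: "x \<in> Z2 \<Longrightarrow> hf x \<in> Z2"
proof -
  assume x: "x \<in> Z2"
  show ?thesis unfolding Z2_def hf_def
  proof (intro CollectI allI conjI)
    fix n
    show "0 \<le> x (Suc n) div 2" using Z2_bounds[OF x, of "Suc n"] by simp
    have "x (Suc n) div 2 = (x (Suc n) mod 2 ^ Suc n) div 2" by (simp only: Z2_mod_self[OF x])
    also have "\<dots> = (x (Suc n) div 2) mod 2 ^ n" by (rule div2_mod)
    finally show "x (Suc n) div 2 < 2 ^ n" by (metis pos_mod_bound zero_less_numeral zero_less_power)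
    have "x (Suc n) = x (Suc (Suc n)) mod 2 ^ Suc n" using Z2_coh[OF x] by metis
    then show "x (Suc n) div 2 = x (Suc (Suc n)) div 2 mod 2 ^ n"
      using div2_mod[of "x (Suc (Suc n))" n] by simp
  qed
qed

lemma hf_double: assumes x: "x \<in> Z2" "x 1 = 0" shows "z2_add (hf x) (hf x) = x"
proof (rule ext)
  fix n
  have ev: "x (Suc n) mod 2 = 0" using Z2_Suc_mod2[OF x(1)] x(2) by simp
  have "z2_add (hf x) (hf x) n = (2 * (x (Suc n) div 2)) mod 2 ^ n"
    unfolding z2_add_def hf_def by simp
  also have "2 * (x (Suc n) div 2) = x (Suc n)" using mult_div_mod_eq[of 2 "x (Suc n)"] ev by simp
  also have "x (Suc n) mod 2 ^ n = x n" using Z2_mod[OF x(1), of n "Suc n"] by simp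
  finally show "z2_add (hf x) (hf x) n = x n" .
qed

lemma half_unique: assumes x: "x \<in> Z2" and y: "y \<in> Z2" and e: "z2_add y y = x" shows "y = hf x"
proof (rule ext)
  fix n
  have "x (Suc n) = (2 * y (Suc n)) mod 2 ^ Suc n"
    using fun_cong[OF e, of "Suc n"] unfolding z2_add_def by simp
  then have "x (Suc n) div 2 = (2 * y (Suc n)) div 2 mod 2 ^ n"
    using div2_mod[of "2 * y (Suc n)" n] by (simp only:)
  also have "\<dots> = y (Suc n) mod 2 ^ n" by simp
  also have "\<dots> = y n" using Z2_mod[OF y, of n "Suc n"] by simp
  finally show "y n = hf x n" unfolding hf_def by simp
qed

lemma z2_even_iff: "x \<in> Z2 \<Longrightarrow> z2_even x \<longleftrightarrow> x 1 = 0"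
proof
  assume x: "x \<in> Z2" and "z2_even x"
  then obtain y where y: "y \<in> Z2" "z2_add y y = x" unfolding z2_even_def by blast
  have "x 1 = (y 1 + y 1) mod 2" using fun_cong[OF y(2), of 1] unfolding z2_add_def by simp
  then show "x 1 = 0" by (simp add: mult_2[symmetric])
next
  assume x: "x \<in> Z2" and "x 1 = 0"
  then show "z2_even x" unfolding z2_even_def using hf_Z2 hf_double by blast
qed

lemma z2_half_eq: "x \<in> Z2 \<Longrightarrow> x 1 = 0 \<Longrightarrow> z2_half x = hf x"
  unfolding z2_half_def
  by (rule the_equality) (auto simp: hf_Z2 hf_double half_unique)

lemma z2_half_Z2: "x \<in> Z2 \<Longrightarrow> x 1 = 0 \<Longrightarrow> z2_half x \<in> Z2"
  by (simp add: z2_half_eq hf_Z2)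

lemma z2_half_val: "x \<in> Z2 \<Longrightarrow> x 1 = 0 \<Longrightarrow> z2_half x n = x (Suc n) div 2"
  by (simp add: z2_half_eq hf_def)



lemma modK: "0 \<le> r \<Longrightarrow> r < 2 \<Longrightarrow> ((r::int) + 2 * c) mod 2 ^ Suc n = r + 2 * (c mod 2 ^ n)"
  using pow2_Suc_mod[of "r + 2 * c" n] by simp

lemma mod_eqE: "(a::int) mod m = b mod m \<Longrightarrow> \<exists>t. a = b + m * t"
proof -
  assume "a mod m = b mod m"
  then have "m dvd a - b" by (simp add: mod_eq_dvd_iff)
  then obtain t where "a - b = m * t" by (auto simp: dvd_def)
  then show ?thesis by (intro exI[of _ t]) simp
qed

lemma mod_eqI: "(a::int) = b + m * t \<Longrightarrow> a mod m = b mod m"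
  by simp

lemma z2_half_double: "z \<in> Z2 \<Longrightarrow> z 1 = 0 \<Longrightarrow> 2 * z2_half z n = z (Suc n)"
  using z2_half_val[of z n] Z2_Suc_mod2[of z n] mult_div_mod_eq[of 2 "z (Suc n)"] by simp

lemma tau_step:
  assumes "0 \<le> rb'" "rb' < 2"
    and c: "(rb + x) mod 2 ^ Suc n = (rb' + 2 * y) mod 2 ^ Suc n"
    and ih: "e' = (e + y) mod 2 ^ n"
  shows "rb' + 2 * e' = ((rb::int) + 2 * e + x) mod 2 ^ Suc n"
proof -
  have "rb' + 2 * e' = (rb' + 2 * (e + y)) mod 2 ^ Suc n" by (simp only: ih modK[OF assms(1,2)])
  also have "\<dots> = (2 * e + (rb' + 2 * y)) mod 2 ^ Suc n" by (simp add: algebra_simps)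
  also have "\<dots> = (2 * e + (rb + x)) mod 2 ^ Suc n" using c by (metis mod_add_right_eq)
  finally show ?thesis by (simp add: algebra_simps)
qed

lemma tau_pow_enc:
  "x \<in> Z2 \<Longrightarrow> length (tau_pow x w) = length w \<and>
     enc (tau_pow x w) = (enc w + x (length w)) mod 2 ^ length w"
proof (induction w arbitrary: x)
  case Nil then show ?case by simp
next
  case (Cons b w)
  let ?n = "length w"
  have x: "x \<in> Z2" by fact
  show ?case
  proof (cases "x 1 = 0")
    case True
    let ?y = "z2_half x"
    have y: "?y \<in> Z2" using z2_half_Z2[OF x True] .
    have ev: "z2_even x" using z2_even_iff[OF x] True by simp
    have eq: "tau_pow x (b # w) = b # tau_pow ?y w" using ev by simp
    have ih: "length (tau_pow ?y w) = ?n" "enc (tau_pow ?y w) = (enc w + ?y ?n) mod 2 ^ ?n"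
      using Cons.IH[OF y] by auto
    have "(if b then 1 else 0) + 2 * enc (tau_pow ?y w) =
      ((if b then 1 else 0) + 2 * enc w + x (Suc ?n)) mod 2 ^ Suc ?n"
      by (rule tau_step[OF _ _ _ ih(2)]) (auto simp: z2_half_double[OF x True])
    then show ?thesis using eq ih by simp
  next
    case False
    then have x1: "x 1 = 1" using Z2_1[OF x] by simp
    have ne: "\<not> z2_even x" using z2_even_iff[OF x] False by simp
    show ?thesis
    proof (cases b)
      case True
      let ?z = "z2_add x (z2_of_int 1)"
      let ?y = "z2_half ?z"
      have z: "?z \<in> Z2" using x by simp
      have z1: "?z 1 = 0" using z2_add_of_int[OF x, of 1 1] x1 by simp
      have y: "?y \<in> Z2" using z2_half_Z2[OF z z1] .
      have eq: "tau_pow x (b # w) = False # tau_pow ?y w" using ne True by simp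
      have ih: "length (tau_pow ?y w) = ?n" "enc (tau_pow ?y w) = (enc w + ?y ?n) mod 2 ^ ?n"
        using Cons.IH[OF y] by auto
      have c: "(1 + x (Suc ?n)) mod 2 ^ Suc ?n = (0 + 2 * ?y ?n) mod 2 ^ Suc ?n"
        using z2_half_double[OF z z1, of ?n] z2_add_of_int[OF x, of 1 "Suc ?n"]
        by (simp add: algebra_simps)
      have "0 + 2 * enc (tau_pow ?y w) = (1 + 2 * enc w + x (Suc ?n)) mod 2 ^ Suc ?n"
        by (rule tau_step[OF _ _ c ih(2)]) auto
      then show ?thesis using eq ih True by simp
    next
      case False
      let ?z = "z2_add x (z2_of_int (-1))"
      let ?y = "z2_half ?z"
      have z: "?z \<in> Z2" using x by simp
      have z1: "?z 1 = 0" using z2_add_of_int[OF x, of "-1" 1] x1 by simp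
      have y: "?y \<in> Z2" using z2_half_Z2[OF z z1] .
      have eq: "tau_pow x (b # w) = True # tau_pow ?y w" using ne False by simp
      have ih: "length (tau_pow ?y w) = ?n" "enc (tau_pow ?y w) = (enc w + ?y ?n) mod 2 ^ ?n"
        using Cons.IH[OF y] by auto
      have "(0 + x (Suc ?n)) mod 2 ^ Suc ?n = (1 + (x (Suc ?n) + -1) mod 2 ^ Suc ?n) mod 2 ^ Suc ?n"
        by (simp add: mod_add_right_eq)
      then have c: "(0 + x (Suc ?n)) mod 2 ^ Suc ?n = (1 + 2 * ?y ?n) mod 2 ^ Suc ?n"
        using z2_half_double[OF z z1, of ?n] z2_add_of_int[OF x, of "-1" "Suc ?n"]
        by simp
      have "1 + 2 * enc (tau_pow ?y w) = (0 + 2 * enc w + x (Suc ?n)) mod 2 ^ Suc ?n"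
        by (rule tau_step[OF _ _ c ih(2)]) auto
      then show ?thesis using eq ih False by simp
    qed
  qed
qed



lemma units_Z2: "x \<in> Z2_units \<Longrightarrow> x \<in> Z2"
  unfolding Z2_units_def by blast

lemma units_inv: "x \<in> Z2_units \<Longrightarrow> \<exists>y\<in>Z2. \<forall>n. (x n * y n) mod 2 ^ n = 1 mod 2 ^ n"
proof -
  assume "x \<in> Z2_units"
  then obtain y where y: "y \<in> Z2" "z2_mult x y = z2_of_int 1" unfolding Z2_units_def by blast
  have "\<forall>n. (x n * y n) mod 2 ^ n = 1 mod 2 ^ n"
  proof
    fix n show "(x n * y n) mod 2 ^ n = 1 mod 2 ^ n"
      using fun_cong[OF y(2), of n] unfolding z2_mult_def z2_of_int_def by (simp only:)
  qed
  then show ?thesis using y(1) by blast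
qed

lemma units_odd: "x \<in> Z2_units \<Longrightarrow> x 1 = 1"
proof -
  assume u: "x \<in> Z2_units"
  then obtain y where "\<forall>n. (x n * y n) mod 2 ^ n = 1 mod 2 ^ n" using units_inv by blast
  then have "(x 1 * y 1) mod 2 = 1" by (metis power_one_right mod_by_1 one_mod_two_eq_one)
  then have "x 1 mod 2 = 1" by (metis mod_mult_eq mod_mult_left_eq mult_zero_left not_mod_2_eq_1_eq_0 zero_neq_one mod_0)
  then show ?thesis using Z2_1[OF units_Z2[OF u]] by auto
qed

lemma mod_2mul_cong: "(a::int) mod 2 ^ n = b mod 2 ^ n \<Longrightarrow> (2 * a * e) mod 2 ^ Suc n = (2 * b * e) mod 2 ^ Suc n"
proof -
  assume "a mod 2 ^ n = b mod 2 ^ n"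
  then obtain t where t: "a = b + 2 ^ n * t" using mod_eqE by blast
  show ?thesis by (rule mod_eqI[of _ _ _ "t * e"]) (simp add: t algebra_simps)
qed

lemma u_elt_enc:
  assumes u: "x \<in> Z2_units"
  shows "length (u_elt x w) = length w \<and> enc (u_elt x w) = (x (length w) * enc w) mod 2 ^ length w"
proof (induction w)
  case Nil then show ?case by simp
next
  case (Cons b w)
  let ?n = "length w"
  have x: "x \<in> Z2" using units_Z2[OF u] .
  have x1: "x 1 = 1" using units_odd[OF u] .
  have xc: "x (Suc ?n) mod 2 ^ ?n = x ?n mod 2 ^ ?n" using Z2_mod[OF x, of ?n "Suc ?n"] Z2_mod_self[OF x] by simp
  let ?e = "enc w"
  let ?e' = "enc (u_elt x w)"
  have ih: "length (u_elt x w) = ?n" "?e' = (x ?n * ?e) mod 2 ^ ?n" using Cons.IH by auto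
  have key: "(2 * ?e') mod 2 ^ Suc ?n = (2 * x (Suc ?n) * ?e) mod 2 ^ Suc ?n"
  proof -
    have "2 * ?e' = 2 * ((x ?n * ?e) mod 2 ^ ?n)" using ih by simp
    also have "\<dots> = (0 + 2 * (x ?n * ?e)) mod 2 ^ Suc ?n" using modK[of 0 "x ?n * ?e" ?n] by simp
    finally have "(2 * ?e') mod 2 ^ Suc ?n = (2 * x ?n * ?e) mod 2 ^ Suc ?n" by (simp add: algebra_simps)
    also have "\<dots> = (2 * x (Suc ?n) * ?e) mod 2 ^ Suc ?n" using mod_2mul_cong[OF xc] by simp
    finally show ?thesis .
  qed
  show ?case
  proof (cases b)
    case False
    have "2 * ?e' = (2 * ?e') mod 2 ^ Suc ?n"
      using ih(2) modK[of 0 "x ?n * ?e" ?n] by simp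
    then have "2 * ?e' = (x (Suc ?n) * (2 * ?e)) mod 2 ^ Suc ?n" using key by (simp add: algebra_simps)
    then show ?thesis using False ih by simp
  next
    case True
    let ?z = "z2_add x (z2_of_int (-1))"
    let ?y = "z2_half ?z"
    have z: "?z \<in> Z2" using x by simp
    have z1: "?z 1 = 0" using z2_add_of_int[OF x, of "-1" 1] x1 by simp
    have y: "?y \<in> Z2" using z2_half_Z2[OF z z1] .
    have eq: "u_elt x (b # w) = True # tau_pow ?y (u_elt x w)" using True by simp
    have t: "length (tau_pow ?y (u_elt x w)) = ?n"
      "enc (tau_pow ?y (u_elt x w)) = (?e' + ?y ?n) mod 2 ^ ?n"
      using tau_pow_enc[OF y, of "u_elt x w"] ih by auto
    have c1: "(1 + 2 * ?y ?n) mod 2 ^ Suc ?n = x (Suc ?n) mod 2 ^ Suc ?n"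
    proof -
      have "(1 + 2 * ?y ?n) mod 2 ^ Suc ?n = (1 + (x (Suc ?n) + -1) mod 2 ^ Suc ?n) mod 2 ^ Suc ?n"
        using z2_half_double[OF z z1, of ?n] z2_add_of_int[OF x, of "-1" "Suc ?n"] by simp
      also have "\<dots> = x (Suc ?n) mod 2 ^ Suc ?n" by (simp add: mod_add_right_eq)
      finally show ?thesis .
    qed
    have "1 + 2 * enc (tau_pow ?y (u_elt x w)) = (1 + 2 * (?e' + ?y ?n)) mod 2 ^ Suc ?n"
      using t(2) modK[of 1 "?e' + ?y ?n" ?n] by simp
    also have "\<dots> = ((1 + 2 * ?y ?n) + 2 * ?e') mod 2 ^ Suc ?n" by (simp add: algebra_simps)
    also have "\<dots> = (x (Suc ?n) + 2 * x (Suc ?n) * ?e) mod 2 ^ Suc ?n"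
      using c1 key by (metis mod_add_cong)
    also have "\<dots> = (x (Suc ?n) * (1 + 2 * ?e)) mod 2 ^ Suc ?n" by (simp add: algebra_simps)
    finally show ?thesis using eq t True by simp
  qed
qed



definition aff :: "(nat \<Rightarrow> int) \<Rightarrow> (nat \<Rightarrow> int) \<Rightarrow> bool list \<Rightarrow> bool list" where
  "aff a b w = dec (length w) (a (length w) * enc w + b (length w))"

lemma length_aff[simp]: "length (aff a b w) = length w"
  by (simp add: aff_def)

lemma enc_aff: "enc (aff a b w) = (a (length w) * enc w + b (length w)) mod 2 ^ length w"
  by (simp add: aff_def)

lemma aff_ext:
  assumes "\<And>w. length (f w) = length w"
    "\<And>w. enc (f w) = (a (length w) * enc w + b (length w)) mod 2 ^ length w"
  shows "f = aff a b"
proof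
  fix w show "f w = aff a b w"
    by (rule words_eq) (simp_all add: assms enc_aff)
qed

lemma tau_aff: "x \<in> Z2 \<Longrightarrow> tau_pow x = aff (z2_of_int 1) x"
  by (rule aff_ext) (simp_all add: tau_pow_enc z2_of_int_def mod_simps)

lemma u_aff: "x \<in> Z2_units \<Longrightarrow> u_elt x = aff x (z2_of_int 0)"
  by (rule aff_ext) (simp_all add: u_elt_enc z2_of_int_def)

lemma modA: "((a::int) * (x mod m) + b) mod m = (a * x + b) mod m"
  by (metis mod_add_left_eq mod_mult_right_eq)

lemma aff_comp: "aff a b \<circ> aff c d = aff (\<lambda>n. a n * c n) (\<lambda>n. a n * d n + b n)"
proof (rule aff_ext)
  fix w :: "bool list"
  show "length ((aff a b \<circ> aff c d) w) = length w" by simp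
  let ?n = "length w"
  have "enc ((aff a b \<circ> aff c d) w) = (a ?n * ((c ?n * enc w + d ?n) mod 2 ^ ?n) + b ?n) mod 2 ^ ?n"
    by (simp add: enc_aff)
  also have "\<dots> = (a ?n * (c ?n * enc w + d ?n) + b ?n) mod 2 ^ ?n" by (rule modA)
  finally show "enc ((aff a b \<circ> aff c d) w) = (a ?n * c ?n * enc w + (a ?n * d ?n + b ?n)) mod 2 ^ ?n"
    by (simp add: algebra_simps)
qed

lemma aff_comp': "aff a b (aff c d w) = aff (\<lambda>n. a n * c n) (\<lambda>n. a n * d n + b n) w"
  using aff_comp[of a b c d] by (metis comp_apply)

lemma aff_cong:
  assumes "\<And>n. a n mod 2 ^ n = a' n mod 2 ^ n" "\<And>n. b n mod 2 ^ n = b' n mod 2 ^ n"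
  shows "aff a b = aff a' b'"
proof
  fix w :: "bool list"
  let ?n = "length w"
  have "(a ?n * enc w + b ?n) mod 2 ^ ?n = (a' ?n * enc w + b' ?n) mod 2 ^ ?n"
    using assms[of ?n] by (metis mod_add_cong mod_mult_cong)
  then show "aff a b w = aff a' b' w" unfolding aff_def by (rule dec_cong)
qed

lemma aff_eqD:
  assumes "aff a b = aff a' b'"
  shows "b n mod 2 ^ n = b' n mod 2 ^ n" "a n mod 2 ^ n = a' n mod 2 ^ n"
proof -
  have "enc (aff a b (dec n 0)) = enc (aff a' b' (dec n 0))" using assms by simp
  then show b: "b n mod 2 ^ n = b' n mod 2 ^ n" by (simp add: enc_aff)
  show "a n mod 2 ^ n = a' n mod 2 ^ n"
  proof (cases n)
    case 0 then show ?thesis by simp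
  next
    case (Suc m)
    have one: "(1::int) mod 2 ^ n = 1"
      by (rule mod_pos_pos_trivial) (use one_less_power[of "2::int" n] Suc in auto)
    have "enc (aff a b (dec n 1)) = enc (aff a' b' (dec n 1))" using assms by simp
    then have "(a n + b n) mod 2 ^ n = (a' n + b' n) mod 2 ^ n" using Suc by (simp add: enc_aff)
    then have "((a n + b n) - b n) mod 2 ^ n = ((a' n + b' n) - b' n) mod 2 ^ n"
      using b by (metis mod_diff_cong)
    then show ?thesis by simp
  qed
qed

lemma aff_id: "aff (z2_of_int 1) (z2_of_int 0) = id"
  by (rule aff_ext[symmetric]) (simp_all add: z2_of_int_def mod_simps enc_bounds, metis enc.simps(1))

definition coh :: "(nat \<Rightarrow> int) \<Rightarrow> bool" where
  "coh a \<longleftrightarrow> (\<forall>n N. n \<le> N \<longrightarrow> a N mod 2 ^ n = a n mod 2 ^ n)"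

lemma Z2_coh_gen: "x \<in> Z2 \<Longrightarrow> coh x"
  unfolding coh_def using Z2_mod Z2_mod_self by metis

lemma coh_of_int: "coh (z2_of_int k)"
  unfolding coh_def z2_of_int_def by (auto simp: mod_mod_cancel le_imp_power_dvd)

lemma aff_take:
  assumes "coh a" "coh b"
  shows "aff a b (take m w) = take m (aff a b w)"
proof (cases "m \<le> length w")
  case False then show ?thesis by simp
next
  case True
  let ?n = "length w"
  have l: "length (take m w) = m" using True by simp
  have "take m (aff a b w) = dec m (a ?n * enc w + b ?n)"
    unfolding aff_def by (rule take_dec[OF True])
  also have "\<dots> = dec m (a m * (enc w mod 2 ^ m) + b m)"
  proof (rule dec_cong)
    have am: "a ?n mod 2 ^ m = a m mod 2 ^ m"
      using assms(1) True unfolding coh_def by blast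
    have bm: "b ?n mod 2 ^ m = b m mod 2 ^ m"
      using assms(2) True unfolding coh_def by blast
    show "(a ?n * enc w + b ?n) mod 2 ^ m = (a m * (enc w mod 2 ^ m) + b m) mod 2 ^ m"
      using am bm by (metis mod_add_cong mod_mult_cong mod_mod_trivial)
  qed
  finally show ?thesis unfolding aff_def l by (simp add: enc_take)
qed

lemma W_carrier: "f \<in> carrier W \<longleftrightarrow> bij f \<and> (\<forall>w n. f (take n w) = take n (f w)) \<and> (\<forall>w. length (f w) = length w)"
  by (simp add: W_def tree_isometries_def)

lemma W_mult[simp]: "g \<otimes>\<^bsub>W\<^esub> h = h \<circ> g"
  by (simp add: W_def)

lemma W_one[simp]: "\<one>\<^bsub>W\<^esub> = id"
  by (simp add: W_def)

lemma inv_iso: "f \<in> carrier W \<Longrightarrow> inv_into UNIV f \<in> carrier W"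
proof -
  assume f: "f \<in> carrier W"
  then have b: "bij f" and p: "\<And>w n. f (take n w) = take n (f w)" and l: "\<And>w. length (f w) = length w"
    by (auto simp: W_carrier)
  let ?g = "inv_into UNIV f"
  have fg: "\<And>w. f (?g w) = w" using b by (simp add: bij_is_surj surj_f_inv_f)
  have gf: "\<And>w. ?g (f w) = w" using b by (simp add: bij_is_inj)
  have "bij ?g" using b by (simp add: bij_imp_bij_inv)
  moreover have "\<forall>w n. ?g (take n w) = take n (?g w)"
  proof (intro allI)
    fix w n
    have "f (take n (?g w)) = take n w" using p fg by simp
    then show "?g (take n w) = take n (?g w)" using gf by metis
  qed
  moreover have "\<forall>w. length (?g w) = length w" using l fg by metis
  ultimately show ?thesis by (simp add: W_carrier)
qed

lemma W_group: "group W"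
proof (rule groupI)
  fix x y assume "x \<in> carrier W" "y \<in> carrier W"
  then show "x \<otimes>\<^bsub>W\<^esub> y \<in> carrier W"
    by (auto simp: W_carrier bij_comp)
next
  show "\<one>\<^bsub>W\<^esub> \<in> carrier W" by (simp add: W_carrier)
next
  fix x y z show "x \<otimes>\<^bsub>W\<^esub> y \<otimes>\<^bsub>W\<^esub> z = x \<otimes>\<^bsub>W\<^esub> (y \<otimes>\<^bsub>W\<^esub> z)" by (simp add: comp_assoc)
next
  fix x show "\<one>\<^bsub>W\<^esub> \<otimes>\<^bsub>W\<^esub> x = x" by simp
next
  fix x assume x: "x \<in> carrier W"
  then have "bij x" by (simp add: W_carrier)
  then have "x \<circ> inv_into UNIV x = id" using surj_iff bij_is_surj by blast
  then show "\<exists>y\<in>carrier W. y \<otimes>\<^bsub>W\<^esub> x = \<one>\<^bsub>W\<^esub>" using inv_iso[OF x] by auto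
qed

lemma W_inv: "g \<in> carrier W \<Longrightarrow> inv\<^bsub>W\<^esub> g = inv_into UNIV g"
proof -
  assume g: "g \<in> carrier W"
  have "bij g" using g by (simp add: W_carrier)
  then have "g \<circ> inv_into UNIV g = id" using surj_iff bij_is_surj by blast
  then show ?thesis using group.inv_equality[OF W_group _ g inv_iso[OF g]] by simp
qed

lemma aff_carrier:
  assumes "coh a" "coh b" "\<And>n. (a n * a' n) mod 2 ^ n = 1 mod 2 ^ n"
  shows "aff a b \<in> carrier W"
proof -
  let ?h = "aff a' (\<lambda>n. - (a' n * b n))"
  have 1: "aff a b \<circ> ?h = id"
    unfolding aff_comp aff_id[symmetric]
  proof (rule aff_cong)
    fix n show "a n * a' n mod 2 ^ n = z2_of_int 1 n mod 2 ^ n"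
      using assms(3) by (simp add: z2_of_int_def)
    have "(a n * - (a' n * b n) + b n) mod 2 ^ n = (b n * (1 - a n * a' n)) mod 2 ^ n"
      by (simp add: algebra_simps)
    also have "\<dots> = (b n * ((1 - a n * a' n) mod 2 ^ n)) mod 2 ^ n" by (simp add: mod_simps)
    also have "(1 - a n * a' n) mod 2 ^ n = (1 - 1) mod 2 ^ n"
      using assms(3)[of n] by (metis mod_diff_cong)
    finally show "(a n * - (a' n * b n) + b n) mod 2 ^ n = z2_of_int 0 n mod 2 ^ n"
      by (simp add: z2_of_int_def)
  qed
  have 2: "?h \<circ> aff a b = id"
    unfolding aff_comp aff_id[symmetric]
  proof (rule aff_cong)
    fix n show "a' n * a n mod 2 ^ n = z2_of_int 1 n mod 2 ^ n"
      using assms(3) by (simp add: z2_of_int_def mult.commute)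
    show "(a' n * b n + - (a' n * b n)) mod 2 ^ n = z2_of_int 0 n mod 2 ^ n"
      by (simp add: z2_of_int_def)
  qed
  have "bij (aff a b)" using o_bij[OF 2 1] .
  then show ?thesis using aff_take[OF assms(1,2)] by (simp add: W_carrier)
qed



abbreviation "one' \<equiv> z2_of_int 1"

lemma coh_one: "coh one'" by (rule coh_of_int)

lemma tau1_Z2: "one' \<in> Z2" by simp

lemma tau_carrier: assumes x: "x \<in> Z2" shows "tau_pow x \<in> carrier W"
  unfolding tau_aff[OF x]
  by (rule aff_carrier[OF coh_one Z2_coh_gen[OF x], of one']) (auto simp: z2_of_int_def mod_simps)

lemma T_sub: "T \<subseteq> carrier W"
  unfolding T_def using tau_carrier by blast

lemma T_iff: "f \<in> T \<longleftrightarrow> (\<exists>x\<in>Z2. f = aff one' x)"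
  unfolding T_def using tau_aff by auto

lemma A_mem: "f \<in> A \<longleftrightarrow> (\<exists>t\<in>T. \<exists>u\<in>U. f = u \<circ> t)"
  unfolding A_def set_mult_def by auto

lemma units_unit: "x \<in> Z2 \<Longrightarrow> y \<in> Z2 \<Longrightarrow> (\<And>n. (x n * y n) mod 2 ^ n = 1 mod 2 ^ n) \<Longrightarrow> x \<in> Z2_units"
  unfolding Z2_units_def z2_mult_def z2_of_int_def by auto

lemma A_iff: "f \<in> A \<longleftrightarrow> (\<exists>a\<in>Z2_units. \<exists>e\<in>Z2. f = aff a e)"
proof
  assume "f \<in> A"
  then obtain t u where t: "t \<in> T" and u: "u \<in> U" and f: "f = u \<circ> t" using A_mem by blast
  obtain d where d: "d \<in> Z2" "t = aff one' d" using t T_iff by blast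
  obtain a where a: "a \<in> Z2_units" "u = u_elt a" using u unfolding U_def by blast
  have aZ: "a \<in> Z2" using units_Z2[OF a(1)] .
  have "f = aff a (z2_mult a d)"
    unfolding f d(2) a(2) u_aff[OF a(1)] aff_comp
  proof (rule aff_cong)
    fix n show "a n * one' n mod 2 ^ n = a n mod 2 ^ n" by (simp add: z2_of_int_def mod_simps)
    show "(a n * d n + z2_of_int 0 n) mod 2 ^ n = z2_mult a d n mod 2 ^ n"
      by (simp add: z2_of_int_def z2_mult_def)
  qed
  moreover have "z2_mult a d \<in> Z2" using aZ d(1) by simp
  ultimately show "\<exists>a\<in>Z2_units. \<exists>e\<in>Z2. f = aff a e" using a(1) by blast
next
  assume "\<exists>a\<in>Z2_units. \<exists>e\<in>Z2. f = aff a e"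
  then obtain a e where a: "a \<in> Z2_units" and e: "e \<in> Z2" and f: "f = aff a e" by blast
  obtain a' where a': "a' \<in> Z2" "\<And>n. (a n * a' n) mod 2 ^ n = 1 mod 2 ^ n" using units_inv[OF a] by blast
  let ?d = "z2_mult a' e"
  have dZ: "?d \<in> Z2" using a' e by simp
  have "f = u_elt a \<circ> tau_pow ?d"
    unfolding f u_aff[OF a] tau_aff[OF dZ] aff_comp
  proof (rule aff_cong)
    fix n show "a n mod 2 ^ n = a n * one' n mod 2 ^ n" by (simp add: z2_of_int_def mod_simps)
    have "(a n * ?d n + z2_of_int 0 n) mod 2 ^ n = (a n * (a' n * e n)) mod 2 ^ n"
      by (simp add: z2_of_int_def z2_mult_def mod_simps)
    also have "\<dots> = ((a n * a' n) * e n) mod 2 ^ n" by (simp add: algebra_simps)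
    also have "\<dots> = (1 * e n) mod 2 ^ n" using a'(2)[of n] by (metis mod_mult_cong)
    finally show "e n mod 2 ^ n = (a n * ?d n + z2_of_int 0 n) mod 2 ^ n" by simp
  qed
  moreover have "tau_pow ?d \<in> T" unfolding T_def using dZ by blast
  moreover have "u_elt a \<in> U" unfolding U_def using a by blast
  ultimately show "f \<in> A" using A_mem by blast
qed

lemma A_carrier_aff: "a \<in> Z2_units \<Longrightarrow> e \<in> Z2 \<Longrightarrow> aff a e \<in> carrier W"
proof -
  assume a: "a \<in> Z2_units" and e: "e \<in> Z2"
  obtain a' where a': "a' \<in> Z2" "\<And>n. (a n * a' n) mod 2 ^ n = 1 mod 2 ^ n" using units_inv[OF a] by blast
  show ?thesis
    by (rule aff_carrier[OF _ _ a'(2)]) (auto simp: Z2_coh_gen units_Z2[OF a] e)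
qed

lemma A_sub: "A \<subseteq> carrier W"
  using A_iff A_carrier_aff by auto

lemma unit_of_int_one: "one' \<in> Z2_units"
  by (rule units_unit[OF z2_of_int_Z2 z2_of_int_Z2, of 1 1]) (auto simp: z2_of_int_def mod_simps)

lemma unit_of_int_m1: "z2_of_int (-1) \<in> Z2_units"
  by (rule units_unit[OF z2_of_int_Z2 z2_of_int_Z2, of "-1" "-1"]) (auto simp: z2_of_int_def mod_simps)



lemma carrier_inv_facts:
  assumes g: "g \<in> carrier W"
  shows "\<And>w. g (inv_into UNIV g w) = w" "\<And>w. inv_into UNIV g (g w) = w"
    "\<And>w. length (g w) = length w" "\<And>w n. g (take n w) = take n (g w)"
proof -
  have b: "bij g" using g by (simp add: W_carrier)
  show "\<And>w. g (inv_into UNIV g w) = w" using b by (simp add: bij_is_surj surj_f_inv_f)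
  show "\<And>w. inv_into UNIV g (g w) = w" using b by (simp add: bij_is_inj)
  show "\<And>w. length (g w) = length w" "\<And>w n. g (take n w) = take n (g w)"
    using g by (auto simp: W_carrier)
qed

lemma tau1: "tau_pow one' = aff one' one'"
  by (rule tau_aff) simp

lemma key_lemma:
  assumes g: "g \<in> carrier W"
    and h1: "inv_into UNIV g \<circ> tau_pow one' \<circ> g \<in> T"
    and h2: "g \<circ> tau_pow one' \<circ> inv_into UNIV g \<in> T"
  shows "g \<in> A"
proof -
  let ?g' = "inv_into UNIV g"
  note gi = carrier_inv_facts[OF g]
  obtain x where x: "x \<in> Z2" "?g' \<circ> aff one' one' \<circ> g = aff one' x" using h1 T_iff tau1 by auto
  obtain b where b: "b \<in> Z2" "g \<circ> aff one' one' \<circ> ?g' = aff one' b" using h2 T_iff tau1 by auto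
  have rel1: "\<And>w. aff one' one' (g w) = g (aff one' x w)"
  proof -
    fix w
    have "aff one' x w = ?g' (aff one' one' (g w))" using x(2) by (metis comp_apply)
    then show "aff one' one' (g w) = g (aff one' x w)" using gi(1) by simp
  qed
  have rel2: "\<And>w. g (aff one' one' w) = aff one' b (g w)"
  proof -
    fix w
    have "aff one' b (g w) = g (aff one' one' (?g' (g w)))" using b(2) by (metis comp_apply)
    then show "g (aff one' one' w) = aff one' b (g w)" using gi(2) by simp
  qed
  define c where "c n = enc (g (dec n 0))" for n
  have cb: "0 \<le> c n \<and> c n < 2 ^ n" for n
    using enc_bounds[of "g (dec n 0)"] gi(3) unfolding c_def by simp
  have step: "enc (g (dec n (int k))) = (c n + int k * b n) mod 2 ^ n" for n k
  proof (induction k)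
    case 0 then show ?case using cb[of n] by (simp add: c_def)
  next
    case (Suc k)
    have "dec n (int (Suc k)) = aff one' one' (dec n (int k))"
      unfolding aff_def length_dec enc_dec by (rule dec_cong) (simp add: z2_of_int_def mod_simps add.commute)
    then have "g (dec n (int (Suc k))) = aff one' b (g (dec n (int k)))" using rel2 by simp
    then have "enc (g (dec n (int (Suc k)))) = ((1 mod 2 ^ n) * enc (g (dec n (int k))) + b n) mod 2 ^ n"
      using gi(3) by (simp add: enc_aff z2_of_int_def)
    also have "\<dots> = (enc (g (dec n (int k))) + b n) mod 2 ^ n" by (simp add: mod_simps)
    also have "\<dots> = ((c n + int k * b n) mod 2 ^ n + b n) mod 2 ^ n" using Suc by simp
    also have "\<dots> = (c n + int (Suc k) * b n) mod 2 ^ n" by (simp add: mod_simps algebra_simps)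
    finally show ?case .
  qed
  have gaff: "g = aff b c"
  proof (rule aff_ext)
    fix w :: "bool list"
    show "length (g w) = length w" by (rule gi(3))
    let ?n = "length w"
    obtain k where k: "enc w = int k" using enc_bounds[of w] by (metis nonneg_int_cases)
    have "g w = g (dec ?n (int k))" using k dec_enc[of w] by metis
    then have "enc (g w) = (c ?n + int k * b ?n) mod 2 ^ ?n" using step by simp
    then show "enc (g w) = (b ?n * enc w + c ?n) mod 2 ^ ?n" unfolding k by (simp add: algebra_simps)
  qed
  have "aff one' one' \<circ> aff b c = aff b c \<circ> aff one' x"
    using rel1 gaff by (auto simp: fun_eq_iff)
  then have "aff (\<lambda>n. one' n * b n) (\<lambda>n. one' n * c n + one' n) = aff (\<lambda>n. b n * one' n) (\<lambda>n. b n * x n + c n)"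
    by (simp add: aff_comp)
  then have E: "(one' n * c n + one' n) mod 2 ^ n = (b n * x n + c n) mod 2 ^ n" for n
    by (rule aff_eqD)
  have "(c n + 1) mod 2 ^ n = (b n * x n + c n) mod 2 ^ n" for n
    using E[of n] by (cases "n = 0") (simp_all add: z2_of_int_def mod_simps)
  then have "((c n + 1) - c n) mod 2 ^ n = ((b n * x n + c n) - c n) mod 2 ^ n" for n
    by (metis mod_diff_cong)
  then have bx: "(b n * x n) mod 2 ^ n = 1 mod 2 ^ n" for n by simp
  have bU: "b \<in> Z2_units" by (rule units_unit[OF b(1) x(1) bx])
  have cZ: "c \<in> Z2"
    unfolding Z2_def
  proof (intro CollectI allI conjI)
    fix n
    show "0 \<le> c n" "c n < 2 ^ n" using cb by auto
    have "c (Suc n) mod 2 ^ n = enc (take n (g (dec (Suc n) 0)))" by (simp add: c_def enc_take)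
    also have "\<dots> = enc (g (take n (dec (Suc n) 0)))" by (simp only: gi(4))
    also have "\<dots> = enc (g (dec n 0))" by (simp only: take_dec[of n "Suc n" 0] le_SucI order_refl)
    finally show "c n = c (Suc n) mod 2 ^ n" by (simp add: c_def)
  qed
  show ?thesis using A_iff bU cZ gaff by blast
qed



abbreviation "m1 \<equiv> z2_of_int (-1)"
abbreviation "z0 \<equiv> z2_of_int 0"
abbreviation "m2 \<equiv> z2_of_int (-2)"

lemma aff_ofi1: "aff (z2_of_int a) b = aff (\<lambda>_. a) b"
  by (rule aff_cong) (simp_all add: z2_of_int_def)

lemma aff_ofi2: "aff a (z2_of_int b) = aff a (\<lambda>_. b)"
  by (rule aff_cong) (simp_all add: z2_of_int_def)

lemma F1: "aff m1 z0 \<circ> aff m1 z0 = id"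
  unfolding aff_id[symmetric] aff_ofi1 aff_ofi2 aff_comp by simp

lemma F2: "aff one' one' \<circ> aff one' m1 = id"
  unfolding aff_id[symmetric] aff_ofi1 aff_ofi2 aff_comp by simp

lemma F3: "aff m1 z0 \<circ> aff one' one' \<circ> aff m1 z0 \<circ> aff one' m1 = aff one' m2"
  unfolding aff_ofi1 aff_ofi2 aff_comp by simp

lemma comm1:
  assumes "\<And>n. L n mod 2 ^ n = 1 mod 2 ^ n"
  shows "aff L t \<circ> aff one' one' = aff one' one' \<circ> aff L t"
  unfolding aff_comp
proof (rule aff_cong)
  fix n
  show "L n * one' n mod 2 ^ n = one' n * L n mod 2 ^ n" by (simp add: mult.commute)
  show "(L n * one' n + t n) mod 2 ^ n = (one' n * t n + one' n) mod 2 ^ n"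
  proof (cases "n = 0")
    case True then show ?thesis by simp
  next
    case False
    then have o: "one' n = 1" by (simp add: z2_of_int_def)
    have "(L n + t n) mod 2 ^ n = (1 + t n) mod 2 ^ n" using assms[of n] by (metis mod_add_cong)
    then show ?thesis using o by (simp add: add.commute)
  qed
qed

lemma aff_comp4: "aff pa pb \<circ> aff qa qb \<circ> aff pa pb \<circ> aff ra rb =
  aff (\<lambda>n. pa n * qa n * pa n * ra n) (\<lambda>n. pa n * qa n * pa n * rb n + (pa n * qa n * pb n + (pa n * qb n + pb n)))"
  by (simp add: aff_comp)

lemma aff_idD: "aff a b = id \<Longrightarrow> (a n) mod 2 ^ n = 1 mod 2 ^ n"
  using aff_eqD(2)[of a b one' z0 n] aff_id by (simp add: z2_of_int_def)

lemma N_A_lemma: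
  assumes g: "g \<in> carrier W"
    and c1: "\<And>h. h \<in> A \<Longrightarrow> inv_into UNIV g \<circ> h \<circ> g \<in> A"
    and c2: "\<And>h. h \<in> A \<Longrightarrow> g \<circ> h \<circ> inv_into UNIV g \<in> A"
  shows "inv_into UNIV g \<circ> tau_pow one' \<circ> g \<in> T"
proof -
  let ?g' = "inv_into UNIV g"
  note gi = carrier_inv_facts[OF g]
  let ?um = "aff m1 z0" and ?tau = "aff one' one'" and ?taum = "aff one' m1" and ?T2 = "aff one' m2"
  have umA: "?um \<in> A" using A_iff unit_of_int_m1 z2_of_int_Z2 by blast
  have tauA: "?tau \<in> A" using A_iff unit_of_int_one z2_of_int_Z2 by blast
  have taumA: "?taum \<in> A" using A_iff unit_of_int_one z2_of_int_Z2 by blast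
  obtain ga gd where gk: "?g' \<circ> ?tau \<circ> g = aff ga gd" "ga \<in> Z2_units" "gd \<in> Z2"
    using c1[OF tauA] A_iff by blast
  obtain pa pb where P: "g \<circ> ?um \<circ> ?g' = aff pa pb" using c2[OF umA] A_iff by blast
  obtain qa qb where Q: "g \<circ> ?tau \<circ> ?g' = aff qa qb" using c2[OF tauA] A_iff by blast
  obtain ra rb where R: "g \<circ> ?taum \<circ> ?g' = aff ra rb" using c2[OF taumA] A_iff by blast
  have F1': "\<And>v. ?um (?um v) = v" using F1 by (metis comp_apply id_apply)
  have F2': "\<And>v. ?tau (?taum v) = v" using F2 by (metis comp_apply id_apply)
  have F3': "\<And>v. ?um (?tau (?um (?taum v))) = ?T2 v" using F3 by (metis comp_apply)
  have "aff pa pb \<circ> aff pa pb = id" unfolding P[symmetric] by (simp add: fun_eq_iff gi F1')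
  then have pp: "(pa n * pa n) mod 2 ^ n = 1 mod 2 ^ n" for n
    unfolding aff_comp by (rule aff_idD)
  have "aff qa qb \<circ> aff ra rb = id" unfolding Q[symmetric] R[symmetric] by (simp add: fun_eq_iff gi F2')
  then have qr: "(qa n * ra n) mod 2 ^ n = 1 mod 2 ^ n" for n
    unfolding aff_comp by (rule aff_idD)
  let ?X = "aff pa pb \<circ> aff qa qb \<circ> aff pa pb \<circ> aff ra rb"
  have Xw: "\<And>w. ?X w = g (?T2 (?g' w))"
    unfolding P[symmetric] Q[symmetric] R[symmetric] by (simp add: gi F3'[symmetric])
  have L: "(pa n * qa n * pa n * ra n) mod 2 ^ n = 1 mod 2 ^ n" for n
  proof -
    have e: "(pa n * qa n * pa n * ra n) = (pa n * pa n) * (qa n * ra n)" by (simp add: algebra_simps)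
    show ?thesis unfolding e using mod_mult_cong[OF pp[of n] qr[of n]] by simp
  qed
  have Xeq: "?X = aff (\<lambda>n. pa n * qa n * pa n * ra n) (\<lambda>n. pa n * qa n * pa n * rb n + (pa n * qa n * pb n + (pa n * qb n + pb n)))"
    by (rule aff_comp4)
  have Xc0: "?X \<circ> ?tau = ?tau \<circ> ?X" unfolding Xeq by (rule comm1) (rule L)
  have Xc: "\<And>v. ?X (?tau v) = ?tau (?X v)"
    using fun_cong[OF Xc0] by simp
  have kc: "\<And>w. aff ga gd (?T2 w) = ?T2 (aff ga gd w)"
  proof -
    fix w
    have "aff ga gd (?T2 w) = ?g' (?tau (g (?T2 w)))" using gk(1) by (metis comp_apply)
    also have "g (?T2 w) = ?X (g w)" using Xw gi(2) by simp
    also have "?tau (?X (g w)) = ?X (?tau (g w))" using Xc by simp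
    also have "?g' (?X (?tau (g w))) = ?T2 (?g' (?tau (g w)))" using Xw gi(2) by simp
    also have "?g' (?tau (g w)) = aff ga gd w" using gk(1) by (metis comp_apply)
    finally show "aff ga gd (?T2 w) = ?T2 (aff ga gd w)" .
  qed
  have "aff ga gd \<circ> ?T2 = ?T2 \<circ> aff ga gd" using kc by (simp add: fun_eq_iff)
  then have E: "(ga n * m2 n + gd n) mod 2 ^ n = (one' n * gd n + m2 n) mod 2 ^ n" for n
    unfolding aff_comp by (rule aff_eqD)
  have two: "(2 * ga n) mod 2 ^ n = 2 mod 2 ^ n" for n
  proof -
    have "(ga n * -2 + gd n) mod 2 ^ n = (gd n + -2) mod 2 ^ n"
    proof (cases "n = 0")
      case True then show ?thesis by simp
    next
      case False
      then have o: "one' n = 1" by (simp add: z2_of_int_def)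
      have "(ga n * -2 + gd n) mod 2 ^ n = (ga n * (-2 mod 2 ^ n) + gd n) mod 2 ^ n" by (rule modA[symmetric])
      also have "\<dots> = (one' n * gd n + m2 n) mod 2 ^ n" using E[of n] by (simp only: z2_of_int_def)
      also have "\<dots> = (gd n + (-2) mod 2 ^ n) mod 2 ^ n" by (simp only: o mult_1, simp only: z2_of_int_def)
      also have "\<dots> = (gd n + -2) mod 2 ^ n" by (rule mod_add_right_eq)
      finally show ?thesis .
    qed
    then obtain t where "ga n * -2 + gd n = gd n + -2 + 2 ^ n * t" using mod_eqE by blast
    then have "2 * ga n = 2 + 2 ^ n * (- t)" by (simp add: algebra_simps)
    then show ?thesis by (rule mod_eqI)
  qed
  have gaZ: "ga \<in> Z2" using units_Z2[OF gk(2)] .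
  have g1: "ga n mod 2 ^ n = 1 mod 2 ^ n" for n
  proof -
    obtain t where "2 * ga (Suc n) = 2 + 2 ^ Suc n * t" using mod_eqE[OF two[of "Suc n"]] by blast
    then have "ga (Suc n) = 1 + 2 ^ n * t" by simp
    then have "ga (Suc n) mod 2 ^ n = 1 mod 2 ^ n" by (rule mod_eqI)
    moreover have "ga (Suc n) mod 2 ^ n = ga n mod 2 ^ n" using Z2_coh[OF gaZ] Z2_mod_self[OF gaZ] by simp
    ultimately show ?thesis by simp
  qed
  have "aff ga gd = aff one' gd"
    by (rule aff_cong) (simp_all add: g1 z2_of_int_def)
  then have "?g' \<circ> ?tau \<circ> g \<in> T" using gk(1) gk(3) T_iff by auto
  then show ?thesis using tau1 by simp
qed



lemma conj_image:
  assumes g: "g \<in> carrier W"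
  shows "g <#\<^bsub>W\<^esub> H #>\<^bsub>W\<^esub> inv\<^bsub>W\<^esub> g = (\<lambda>h. inv_into UNIV g \<circ> h \<circ> g) ` H"
  unfolding l_coset_def r_coset_def W_inv[OF g] by (auto simp: comp_assoc)

lemma normalizer_iff:
  assumes "H \<subseteq> carrier W"
  shows "g \<in> normalizer W H \<longleftrightarrow> g \<in> carrier W \<and> (\<lambda>h. inv_into UNIV g \<circ> h \<circ> g) ` H = H"
  unfolding normalizer_def stabilizer_def using assms conj_image by auto

lemma aff_inv_comp:
  assumes "\<And>n. (a n * a' n) mod 2 ^ n = 1 mod 2 ^ n"
  shows "aff a b \<circ> aff a' (\<lambda>n. - (a' n * b n)) = id" "aff a' (\<lambda>n. - (a' n * b n)) \<circ> aff a b = id"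
proof -
  show "aff a b \<circ> aff a' (\<lambda>n. - (a' n * b n)) = id"
    unfolding aff_comp aff_id[symmetric]
  proof (rule aff_cong)
    fix n show "a n * a' n mod 2 ^ n = z2_of_int 1 n mod 2 ^ n"
      using assms by (simp add: z2_of_int_def)
    have "(a n * - (a' n * b n) + b n) mod 2 ^ n = (b n * (1 - a n * a' n)) mod 2 ^ n"
      by (simp add: algebra_simps)
    also have "\<dots> = (b n * ((1 - a n * a' n) mod 2 ^ n)) mod 2 ^ n" by (simp add: mod_simps)
    also have "(1 - a n * a' n) mod 2 ^ n = (1 - 1) mod 2 ^ n"
      using assms[of n] by (metis mod_diff_cong)
    finally show "(a n * - (a' n * b n) + b n) mod 2 ^ n = z2_of_int 0 n mod 2 ^ n"
      by (simp add: z2_of_int_def)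
  qed
  show "aff a' (\<lambda>n. - (a' n * b n)) \<circ> aff a b = id"
    unfolding aff_comp aff_id[symmetric]
  proof (rule aff_cong)
    fix n show "a' n * a n mod 2 ^ n = z2_of_int 1 n mod 2 ^ n"
      using assms by (simp add: z2_of_int_def mult.commute)
    show "(a' n * b n + - (a' n * b n)) mod 2 ^ n = z2_of_int 0 n mod 2 ^ n"
      by (simp add: z2_of_int_def)
  qed
qed

lemma conjT:
  assumes "\<And>n. (a n * a' n) mod 2 ^ n = 1 mod 2 ^ n"
  shows "aff a' (\<lambda>n. - (a' n * e n)) \<circ> aff one' z \<circ> aff a e = aff one' (z2_mult a' z)"
  unfolding aff_comp
proof (rule aff_cong)
  fix n
  show "a' n * one' n * a n mod 2 ^ n = one' n mod 2 ^ n"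
  proof (cases "n = 0")
    case True then show ?thesis by simp
  next
    case False
    then have o: "one' n = 1" by (simp add: z2_of_int_def)
    show ?thesis using assms[of n] by (simp add: o mult.commute)
  qed
  show "(a' n * one' n * e n + (a' n * z n + - (a' n * e n))) mod 2 ^ n = z2_mult a' z n mod 2 ^ n"
  proof (cases "n = 0")
    case True then show ?thesis by simp
  next
    case False
    then have o: "one' n = 1" by (simp add: z2_of_int_def)
    show ?thesis by (simp add: o z2_mult_def)
  qed
qed

lemma A_sub_NT: assumes g: "g \<in> A" shows "g \<in> normalizer W T"
proof -
  obtain a e where a: "a \<in> Z2_units" and e: "e \<in> Z2" and ge: "g = aff a e" using g A_iff by blast
  obtain a' where a': "a' \<in> Z2" "\<And>n. (a n * a' n) mod 2 ^ n = 1 mod 2 ^ n" using units_inv[OF a] by blast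
  have gc: "g \<in> carrier W" using g A_sub by blast
  have ginv: "inv_into UNIV g = aff a' (\<lambda>n. - (a' n * e n))"
    unfolding ge by (rule inv_unique_comp) (rule aff_inv_comp[OF a'(2)])+
  have cj: "\<And>z. inv_into UNIV g \<circ> aff one' z \<circ> g = aff one' (z2_mult a' z)"
    unfolding ginv unfolding ge by (rule conjT[OF a'(2)])
  have "(\<lambda>h. inv_into UNIV g \<circ> h \<circ> g) ` T = T"
  proof
    show "(\<lambda>h. inv_into UNIV g \<circ> h \<circ> g) ` T \<subseteq> T"
    proof
      fix f assume "f \<in> (\<lambda>h. inv_into UNIV g \<circ> h \<circ> g) ` T"
      then obtain z where z: "z \<in> Z2" "f = inv_into UNIV g \<circ> aff one' z \<circ> g" using T_iff by auto
      then have "f = aff one' (z2_mult a' z)" using cj by simp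
      moreover have "z2_mult a' z \<in> Z2" using a'(1) z(1) by simp
      ultimately show "f \<in> T" using T_iff by blast
    qed
    show "T \<subseteq> (\<lambda>h. inv_into UNIV g \<circ> h \<circ> g) ` T"
    proof
      fix f assume "f \<in> T"
      then obtain y where y: "y \<in> Z2" "f = aff one' y" using T_iff by auto
      let ?z = "z2_mult a y"
      have zZ: "?z \<in> Z2" using units_Z2[OF a] y(1) by simp
      have "inv_into UNIV g \<circ> aff one' ?z \<circ> g = aff one' (z2_mult a' ?z)" by (rule cj)
      also have "\<dots> = aff one' y"
      proof (rule aff_cong)
        fix n show "one' n mod 2 ^ n = one' n mod 2 ^ n" by simp
        have "z2_mult a' ?z n mod 2 ^ n = (a' n * (a n * y n)) mod 2 ^ n"
          by (simp add: z2_mult_def mod_simps)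
        also have "\<dots> = ((a n * a' n) * y n) mod 2 ^ n" by (simp add: algebra_simps)
        also have "\<dots> = (1 * y n) mod 2 ^ n" using a'(2)[of n] by (metis mod_mult_cong)
        finally show "z2_mult a' ?z n mod 2 ^ n = y n mod 2 ^ n" by simp
      qed
      finally have "f = inv_into UNIV g \<circ> aff one' ?z \<circ> g" using y(2) by simp
      moreover have "aff one' ?z \<in> T" using T_iff zZ by blast
      ultimately show "f \<in> (\<lambda>h. inv_into UNIV g \<circ> h \<circ> g) ` T" by blast
    qed
  qed
  then show ?thesis using normalizer_iff[OF T_sub] gc by blast
qed

lemma NT_sub_A: assumes g: "g \<in> normalizer W T" shows "g \<in> A"
proof -
  have gc: "g \<in> carrier W" and im: "(\<lambda>h. inv_into UNIV g \<circ> h \<circ> g) ` T = T"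
    using g normalizer_iff[OF T_sub] by auto
  note gi = carrier_inv_facts[OF gc]
  have tT: "tau_pow one' \<in> T" unfolding T_def by (rule imageI) (rule z2_of_int_Z2)
  have "inv_into UNIV g \<circ> tau_pow one' \<circ> g \<in> (\<lambda>h. inv_into UNIV g \<circ> h \<circ> g) ` T"
    by (rule imageI[OF tT])
  then have h1: "inv_into UNIV g \<circ> tau_pow one' \<circ> g \<in> T" unfolding im .
  have "tau_pow one' \<in> (\<lambda>h. inv_into UNIV g \<circ> h \<circ> g) ` T" unfolding im by (rule tT)
  then obtain t where t: "t \<in> T" "tau_pow one' = inv_into UNIV g \<circ> t \<circ> g" by (rule imageE)
  have "g \<circ> tau_pow one' \<circ> inv_into UNIV g = t" unfolding t(2) by (simp add: fun_eq_iff gi)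
  then have h2: "g \<circ> tau_pow one' \<circ> inv_into UNIV g \<in> T" using t(1) by simp
  show ?thesis by (rule key_lemma[OF gc h1 h2])
qed

lemma NT_eq: "normalizer W T = A"
  using A_sub_NT NT_sub_A by blast

lemma NA_sub_A: assumes g: "g \<in> normalizer W A" shows "g \<in> A"
proof -
  have gc: "g \<in> carrier W" and im: "(\<lambda>h. inv_into UNIV g \<circ> h \<circ> g) ` A = A"
    using g normalizer_iff[OF A_sub] by auto
  note gi = carrier_inv_facts[OF gc]
  let ?g' = "inv_into UNIV g"
  have c1: "\<And>h. h \<in> A \<Longrightarrow> ?g' \<circ> h \<circ> g \<in> A"
  proof -
    fix h assume "h \<in> A"
    then have "?g' \<circ> h \<circ> g \<in> (\<lambda>h. ?g' \<circ> h \<circ> g) ` A" by (rule imageI)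
    then show "?g' \<circ> h \<circ> g \<in> A" unfolding im .
  qed
  have c2: "\<And>h. h \<in> A \<Longrightarrow> g \<circ> h \<circ> ?g' \<in> A"
  proof -
    fix h assume "h \<in> A"
    then have "h \<in> (\<lambda>h. ?g' \<circ> h \<circ> g) ` A" unfolding im .
    then obtain h0 where h0: "h0 \<in> A" "h = ?g' \<circ> h0 \<circ> g" by (rule imageE)
    have "g \<circ> h \<circ> ?g' = h0" unfolding h0(2) by (simp add: fun_eq_iff gi)
    then show "g \<circ> h \<circ> ?g' \<in> A" using h0(1) by simp
  qed
  have h1: "?g' \<circ> tau_pow one' \<circ> g \<in> T" by (rule N_A_lemma[OF gc c1 c2])
  have g'c: "?g' \<in> carrier W" using inv_iso[OF gc] .
  have bg: "bij g" using gc by (simp add: W_carrier)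
  have gg: "inv_into UNIV ?g' = g" using inv_inv_eq[OF bg] .
  have "inv_into UNIV ?g' \<circ> tau_pow one' \<circ> ?g' \<in> T"
    by (rule N_A_lemma[OF g'c]) (simp_all add: gg c1 c2)
  then have h2: "g \<circ> tau_pow one' \<circ> ?g' \<in> T" using gg by simp
  show ?thesis by (rule key_lemma[OF gc h1 h2])
qed

lemma A_sub_NA: assumes g: "g \<in> A" shows "g \<in> normalizer W A"
proof -
  have sg: "subgroup A W" using group.normalizer_imp_subgroup[OF W_group T_sub] NT_eq by simp
  have gc: "g \<in> carrier W" using g A_sub by blast
  note gi = carrier_inv_facts[OF gc]
  let ?g' = "inv_into UNIV g"
  have gi': "inv\<^bsub>W\<^esub> g \<in> A" using subgroup.m_inv_closed[OF sg g] .
  have "(\<lambda>h. ?g' \<circ> h \<circ> g) ` A = A"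
  proof
    show "(\<lambda>h. ?g' \<circ> h \<circ> g) ` A \<subseteq> A"
    proof
      fix f assume "f \<in> (\<lambda>h. ?g' \<circ> h \<circ> g) ` A"
      then obtain h where h: "h \<in> A" "f = ?g' \<circ> h \<circ> g" by blast
      have "(g \<otimes>\<^bsub>W\<^esub> h) \<otimes>\<^bsub>W\<^esub> inv\<^bsub>W\<^esub> g \<in> A"
        using subgroup.m_closed[OF sg] g h(1) gi' by blast
      then show "f \<in> A" using h(2) W_inv[OF gc] by (simp add: comp_assoc)
    qed
    show "A \<subseteq> (\<lambda>h. ?g' \<circ> h \<circ> g) ` A"
    proof
      fix h assume h: "h \<in> A"
      have "(inv\<^bsub>W\<^esub> g \<otimes>\<^bsub>W\<^esub> h) \<otimes>\<^bsub>W\<^esub> g \<in> A"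
        using subgroup.m_closed[OF sg] g h gi' by blast
      then have h0: "g \<circ> h \<circ> ?g' \<in> A" using W_inv[OF gc] by (simp add: comp_assoc)
      have "h = ?g' \<circ> (g \<circ> h \<circ> ?g') \<circ> g" by (simp add: fun_eq_iff gi)
      then show "h \<in> (\<lambda>h. ?g' \<circ> h \<circ> g) ` A" using h0 by blast
    qed
  qed
  then show ?thesis using normalizer_iff[OF A_sub] gc by blast
qed

theorem theorem4p13:
  shows "normalizer W T = A \<and> normalizer W A = A"
  using NT_eq NA_sub_A A_sub_NA by blast


end
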